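(* Let $(M,d,+)$ be a metric semigroup, $f:I_a^b\to M$, $0\ne\alpha\le1$, and $x,y\in I_a^b$ with $x\le y$. Then $$\mathrm{md}_{|\alpha|}(f_\alpha^x,I_x^y\lfloor\alpha)\le\sum_{\beta\in\mathbb N_0^n,\ \alpha\le\beta\le1}\mathrm{md}_{|\beta|}\big(f_\beta^a,I_{a+\alpha(x-a)}^{x+\alpha(y-x)}\lfloor\beta\big).$$
   Context: Fix $n\in\mathbb N$ and $a,b\in\mathbb R^n$ with $a<b$. Inequalities between points of $\mathbb R^n$ or multiindices are componentwise ($x\le y$ means $x_i\le y_i$ for all $i$; $x<y$ means $x_i<y_i$ for all $i$). For $x\le y$, $I_x^y=\prod_{i=1}^n[x_i,y_i]$. For $\theta\in\mathbb N_0^n$ and $x\in\mathbb R^n$, $\theta x=(\theta_1x_1,\dots,\theta_nx_n)$ and $|\theta|=\theta_1+\dots+\theta_n$; $0$ and $1$ denote $(0,\dots,0)$ and $(1,\dots,1)$. A multiindex $\theta$ with $0\le\theta\le1$ is even (odd) if $|\theta|$ is even (odd); $\mathcal E(n)$ and $\mathcal O(n)$ are the sets of even and odd $\theta\le1$. A metric semigroup $(M,d,+)$ is a metric space $(M,d)$ with an Abelian semigroup operation $+$ such that $d(u+w,v+w)=d(u,v)$ for all $u,v,w\in M$. For $f:I_a^b\to M$ and $x\le y$ in $I_a^b$, $\mathrm{md}_n(f,I_x^y)=d\big(\sum_{\theta\in\mathcal E(n)}f(x+\theta(y-x)),\sum_{\eta\in\mathcal O(n)}f(x+\eta(y-x))\big)$.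 For $0\ne\alpha\le1$ ($\alpha\in\mathbb N_0^n$) and $x\in\mathbb R^n$ let $x\lfloor\alpha=(x_i:\alpha_i=1)\in\mathbb R^{|\alpha|}$ and $I_x^y\lfloor\alpha=I_{x\lfloor\alpha}^{y\lfloor\alpha}$. For $z\in I_a^b$ the truncated map $f_\alpha^z:I_a^b\lfloor\alpha\to M$ is $f_\alpha^z(x\lfloor\alpha)=f(z+\alpha(x-z))$, $x\in I_a^b$. The quantity $\mathrm{md}_{|\alpha|}(f_\alpha^z,I_x^y\lfloor\alpha)$ is $\mathrm{md}_{|\alpha|}$ (the formula above in dimension $|\alpha|$) for the map $f_\alpha^z$ on the rectangle $I_{x\lfloor\alpha}^{y\lfloor\alpha}\subset\mathbb R^{|\alpha|}$. *)

theory Defs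
  imports Complex_Main "HOL-Library.FuncSet"
begin

definition metric_semigroup :: "('m \<Rightarrow> 'm \<Rightarrow> real) \<Rightarrow> ('m \<Rightarrow> 'm \<Rightarrow> 'm) \<Rightarrow> bool" where
  "metric_semigroup d add \<longleftrightarrow>
     (\<forall>u v. 0 \<le> d u v) \<and> (\<forall>u v. d u v = 0 \<longleftrightarrow> u = v) \<and> (\<forall>u v. d u v = d v u) \<and>
     (\<forall>u v w. d u w \<le> d u v + d v w) \<and>
     (\<forall>u v w. add (add u v) w = add u (add v w)) \<and> (\<forall>u v. add u v = add v u) \<and>
     (\<forall>u v w. d (add u w) (add v w) = d u v)"

text \<open>Semigroup sum over a finite nonempty index set (no neutral element needed).\<close>
definition sgsum :: "('m \<Rightarrow> 'm \<Rightarrow> 'm) \<Rightarrow> ('a \<Rightarrow> 'm) \<Rightarrow> 'a set \<Rightarrow> 'm" where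
  "sgsum add g S = the (Finite_Set.fold
      (\<lambda>x acc. Some (case acc of None \<Rightarrow> g x | Some s \<Rightarrow> add (g x) s)) None S)"

text \<open>Points of \<real>^S (S a finite index set, e.g. S = {..<n}) are extensional functions on S.
  Rectangle I_x^y over index set S.\<close>
definition rect :: "nat set \<Rightarrow> (nat \<Rightarrow> real) \<Rightarrow> (nat \<Rightarrow> real) \<Rightarrow> (nat \<Rightarrow> real) set" where
  "rect S x y = PiE S (\<lambda>i. {x i..y i})"

text \<open>A multiindex \<theta> \<le> 1 is represented by its support T \<subseteq> S; \<theta> x is then
  (\<lambda>i. of_bool (i \<in> T) * x i), |\<theta>| = card T.  Vertex x + \<theta>(y - x):\<close>
definition vtx :: "nat set \<Rightarrow> nat set \<Rightarrow> (nat \<Rightarrow> real) \<Rightarrow> (nat \<Rightarrow> real) \<Rightarrow> (nat \<Rightarrow> real)" where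
  "vtx S T x y = (\<lambda>i\<in>S. x i + of_bool (i \<in> T) * (y i - x i))"

definition md :: "('m \<Rightarrow> 'm \<Rightarrow> real) \<Rightarrow> ('m \<Rightarrow> 'm \<Rightarrow> 'm) \<Rightarrow> nat set
    \<Rightarrow> ((nat \<Rightarrow> real) \<Rightarrow> 'm) \<Rightarrow> (nat \<Rightarrow> real) \<Rightarrow> (nat \<Rightarrow> real) \<Rightarrow> real" where
  "md d add S g x y =
     d (sgsum add (\<lambda>T. g (vtx S T x y)) {T. T \<subseteq> S \<and> even (card T)})
       (sgsum add (\<lambda>T. g (vtx S T x y)) {T. T \<subseteq> S \<and> odd (card T)})"

text \<open>Truncation x\<lfloor>\<alpha> for \<alpha> with support A: restriction of x to A.\<close>
definition trunc_pt :: "nat set \<Rightarrow> (nat \<Rightarrow> real) \<Rightarrow> (nat \<Rightarrow> real)" where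
  "trunc_pt A x = restrict x A"

text \<open>Truncated map f_\<alpha>^z : I_a^b\<lfloor>\<alpha> \<rightarrow> M, f_\<alpha>^z(x\<lfloor>\<alpha>) = f(z + \<alpha>(x - z)), ambient index set N.\<close>
definition trunc_map :: "nat set \<Rightarrow> ((nat \<Rightarrow> real) \<Rightarrow> 'm) \<Rightarrow> nat set \<Rightarrow> (nat \<Rightarrow> real)
    \<Rightarrow> ((nat \<Rightarrow> real) \<Rightarrow> 'm)" where
  "trunc_map N f A z = (\<lambda>u. f (\<lambda>i\<in>N. z i + of_bool (i \<in> A) * (u i - z i)))"

end

theory Submission imports Defs begin

definition opl :: "('m \<Rightarrow> 'm \<Rightarrow> 'm) \<Rightarrow> 'm option \<Rightarrow> 'm option \<Rightarrow> 'm option" where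
  "opl add p q = (case p of None \<Rightarrow> q | Some u \<Rightarrow> (case q of None \<Rightarrow> Some u | Some v \<Rightarrow> Some (add u v)))"

locale msg =
  fixes d :: "'m \<Rightarrow> 'm \<Rightarrow> real" and add :: "'m \<Rightarrow> 'm \<Rightarrow> 'm"
  assumes ms: "metric_semigroup d add"
begin

lemma add_assoc: "add (add u v) w = add u (add v w)" and add_comm: "add u v = add v u"
  and d_sym: "d u v = d v u" and d_tri: "d u w \<le> d u v + d v w"
  and d_inv: "d (add u w) (add v w) = d u v"
  using ms unfolding metric_semigroup_def by blast+

lemma add_lcomm: "add u (add v w) = add v (add u w)"
proof -
  have "add u (add v w) = add (add u v) w" by (rule add_assoc[symmetric])
  also have "add u v = add v u" by (rule add_comm)
  finally show ?thesis by (simp only: add_assoc)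
qed

lemma d_add: "d (add u w) (add v z) \<le> d u v + d w z"
proof -
  have "d (add u w) (add v z) \<le> d (add u w) (add v w) + d (add v w) (add v z)" by (rule d_tri)
  also have "d (add v w) (add v z) = d w z" using d_inv[of w v z] by (simp add: add_comm)
  finally show ?thesis by (simp add: d_inv)
qed

sublocale S: comm_monoid_set "opl add" None
proof
  fix a b c :: "'m option"
  show "opl add (opl add a b) c = opl add a (opl add b c)"
    by (auto simp: opl_def add_assoc split: option.splits)
  show "opl add a b = opl add b a"
    by (auto simp: opl_def add_comm split: option.splits)
  show "opl add a None = a" by (simp add: opl_def split: option.splits)
qed

lemma sgsum_F: "sgsum add g S = the (S.F (\<lambda>x. Some (g x)) S)"
proof -
  have "(\<lambda>x acc. Some (case acc of None \<Rightarrow> g x | Some s \<Rightarrow> add (g x) s)) = (opl add \<circ> (\<lambda>x. Some (g x)))"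
    by (auto simp: opl_def fun_eq_iff split: option.splits)
  then show ?thesis unfolding sgsum_def S.eq_fold by simp
qed

lemma F_Some: "finite S \<Longrightarrow> S \<noteq> {} \<Longrightarrow> S.F (\<lambda>x. Some (g x)) S = Some (sgsum add g S)"
proof (induction S rule: finite_ne_induct)
  case (singleton x) then show ?case by (simp add: sgsum_F opl_def)
next
  case (insert x F) then show ?case by (simp add: sgsum_F opl_def split: option.split)
qed

lemma opl_Some[simp]: "opl add (Some u) (Some v) = Some (add u v)" by (simp add: opl_def)

lemma inj_ins: "c \<notin> D \<Longrightarrow> inj_on (insert c) (Pow D)"
proof (rule inj_onI)
  fix x y assume "c \<notin> D" "x \<in> Pow D" "y \<in> Pow D" "insert c x = insert c y"
  then show "x = y" by (metis PowD in_mono insert_ident)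
qed

definition ee :: "(nat set \<Rightarrow> 'm) \<Rightarrow> (nat set \<Rightarrow> 'm) \<Rightarrow> nat set \<Rightarrow> 'm" where
  "ee e p C = sgsum add (\<lambda>U. if even (card U) then e U else p U) (Pow C)"

lemma ee_insert:
  assumes "finite D" "c \<notin> D"
  shows "ee e p (insert c D) = add (ee e p D) (ee (\<lambda>U. p (insert c U)) (\<lambda>U. e (insert c U)) D)"
proof -
  let ?g = "\<lambda>U. Some (if even (card U) then e U else p U)"
  have fin: "finite (Pow D)" using assms by simp
  have dis: "Pow D \<inter> insert c ` Pow D = {}" using assms by auto
  have inj: "inj_on (insert c) (Pow D)" using assms(2) by (rule inj_ins)
  have "Some (ee e p (insert c D)) = S.F ?g (Pow (insert c D))"
    unfolding ee_def by (rule F_Some[symmetric]) (use assms in auto)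
  also have "\<dots> = opl add (S.F ?g (Pow D)) (S.F ?g (insert c ` Pow D))"
    unfolding Pow_insert using fin dis by (intro S.union_disjoint) auto
  also have "S.F ?g (insert c ` Pow D) = S.F (?g \<circ> insert c) (Pow D)"
    using inj by (rule S.reindex)
  also have "\<dots> = S.F (\<lambda>U. Some (if even (card U) then p (insert c U) else e (insert c U))) (Pow D)"
  proof (rule S.cong[OF refl])
    fix U assume "U \<in> Pow D"
    have "finite U" using assms(1) \<open>U \<in> Pow D\<close> finite_subset by blast
    moreover have "c \<notin> U" using assms(2) \<open>U \<in> Pow D\<close> by blast
    ultimately have "card (insert c U) = Suc (card U)" by simp
    then show "(?g \<circ> insert c) U = Some (if even (card U) then p (insert c U) else e (insert c U))"
      by simp
  qed
  also have "\<dots> = Some (ee (\<lambda>U. p (insert c U)) (\<lambda>U. e (insert c U)) D)"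
    unfolding ee_def by (rule F_Some) (use assms in auto)
  also have "S.F ?g (Pow D) = Some (ee e p D)"
    unfolding ee_def by (rule F_Some) (use assms in auto)
  finally show ?thesis by simp
qed

lemma telescope:
  assumes "finite C0"
  shows "d (e C0) (p C0) \<le> (\<Sum>C\<in>Pow C0. d (ee e p C) (ee p e C))"
  using assms
proof (induction C0 arbitrary: e p rule: finite_induct)
  case empty
  have "ee e p {} = e {}" "ee p e {} = p {}"
    unfolding ee_def sgsum_def by simp_all
  then show ?case by simp
next
  case (insert c C)
  define e' where "e' = (\<lambda>U. e (insert c U))"
  define p' where "p' = (\<lambda>U. p (insert c U))"
  let ?a = "\<lambda>C. d (ee e p C) (ee p e C)"
  have IH: "d (e' C) (p' C) \<le> (\<Sum>D\<in>Pow C. d (ee e' p' D) (ee p' e' D))"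
    by (rule insert.IH)
  have step: "d (ee e' p' D) (ee p' e' D) \<le> ?a D + ?a (insert c D)" if "D \<in> Pow C" for D
  proof -
    have fD: "finite D" "c \<notin> D" using that insert.hyps finite_subset by auto
    let ?X = "ee e' p' D" and ?Y = "ee p' e' D" and ?P = "ee e p D" and ?Q = "ee p e D"
    have i1: "ee e p (insert c D) = add ?P ?Y" unfolding p'_def e'_def by (rule ee_insert[OF fD])
    have i2: "ee p e (insert c D) = add ?Q ?X" unfolding p'_def e'_def by (rule ee_insert[OF fD])
    have "d ?X ?Y = d (add ?X (add ?P ?Q)) (add ?Y (add ?P ?Q))" by (simp add: d_inv)
    also have "add ?X (add ?P ?Q) = add (add ?Q ?X) ?P" by (simp only: add_assoc add_comm add_lcomm)
    also have "add ?Y (add ?P ?Q) = add (add ?P ?Y) ?Q" by (simp only: add_assoc add_comm add_lcomm)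
    also have "d (add (add ?Q ?X) ?P) (add (add ?P ?Y) ?Q) \<le> d (add ?Q ?X) (add ?P ?Y) + d ?P ?Q"
      by (rule d_add)
    finally have "d ?X ?Y \<le> d (add ?Q ?X) (add ?P ?Y) + d ?P ?Q" .
    then show ?thesis unfolding i1 i2 using d_sym[of "add ?Q ?X" "add ?P ?Y"] by linarith
  qed
  have "d (e (insert c C)) (p (insert c C)) = d (e' C) (p' C)" by (simp add: e'_def p'_def)
  also note IH
  also have "(\<Sum>D\<in>Pow C. d (ee e' p' D) (ee p' e' D)) \<le> (\<Sum>D\<in>Pow C. ?a D + ?a (insert c D))"
    by (rule sum_mono) (rule step)
  also have "\<dots> = (\<Sum>D\<in>Pow C. ?a D) + (\<Sum>D\<in>Pow C. ?a (insert c D))" by (rule sum.distrib)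
  also have "(\<Sum>D\<in>Pow C. ?a (insert c D)) = (\<Sum>D\<in>insert c ` Pow C. ?a D)"
    by (subst sum.reindex[OF inj_ins]) (use insert.hyps in \<open>auto simp: o_def\<close>)
  also have "(\<Sum>D\<in>Pow C. ?a D) + (\<Sum>D\<in>insert c ` Pow C. ?a D) = (\<Sum>D\<in>Pow (insert c C). ?a D)"
    unfolding Pow_insert using insert.hyps by (intro sum.union_disjoint[symmetric]) auto
  finally show ?case .
qed


lemma key_bij:
  assumes fin: "finite A" "finite C" and dj: "A \<inter> C = {}"
  shows "bij_betw (\<lambda>(U, T). T \<union> U) (SIGMA U:Pow C. {T. T \<subseteq> A \<and> even (card T) = (even (card U) = q)})
           {T'. T' \<subseteq> A \<union> C \<and> even (card T') = q}"
proof -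
  have c1: "T \<union> U \<subseteq> A \<union> C \<and> even (card (T \<union> U)) = q"
    if h: "U \<subseteq> C" "T \<subseteq> A" "even (card T) = (even (card U) = q)" for U T
  proof -
    have "card (T \<union> U) = card T + card U"
      using h dj fin by (intro card_Un_disjoint) (auto intro: finite_subset)
    then show ?thesis using h by auto
  qed
  have c2: "T' - A \<in> Pow C \<and> T' \<inter> A \<subseteq> A \<and> even (card (T' \<inter> A)) = (even (card (T' - A)) = q)"
    if h: "T' \<subseteq> A \<union> C" "even (card T') = q" for T'
  proof -
    have "card T' = card (T' \<inter> A) + card (T' - A)"
      using h fin by (metis card_Int_Diff finite_Un finite_subset)
    then show ?thesis using h by auto
  qed
  show ?thesis
    apply (rule bij_betw_byWitness[where f'="\<lambda>T'. (T' - A, T' \<inter> A)"])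
    using dj c1 c2 by auto
qed


lemma sgsum_cong: "(\<And>z. z \<in> S \<Longrightarrow> g z = h z) \<Longrightarrow> sgsum add g S = sgsum add h S"
  unfolding sgsum_F by (metis (mono_tags, lifting) S.cong)

lemma ne_par: "A \<noteq> {} \<Longrightarrow> finite A \<Longrightarrow> {T. T \<subseteq> A \<and> even (card T) = q} \<noteq> {}"
proof (cases q)
  case True then show ?thesis by (auto intro!: exI[of _ "{}"])
next
  case False
  assume "A \<noteq> {}" then obtain a0 where "a0 \<in> A" by auto
  then show ?thesis using False by (auto intro!: exI[of _ "{a0}"])
qed

lemma main:
  fixes f :: "(nat \<Rightarrow> real) \<Rightarrow> 'm" and a x y :: "nat \<Rightarrow> real"
  assumes AN: "A \<subseteq> {..<n}" and Ane: "A \<noteq> {}"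
  shows "md d add A (trunc_map {..<n} f A x) (trunc_pt A x) (trunc_pt A y)
    \<le> (\<Sum>B\<in>{B. A \<subseteq> B \<and> B \<subseteq> {..<n}}.
         md d add B (trunc_map {..<n} f B a)
           (trunc_pt B (vtx {..<n} A a x)) (trunc_pt B (vtx {..<n} A x y)))"
proof -
  define N where "N = {..<n}"
  define A' where "A' = N - A"
  define Fp where "Fp T U = f (\<lambda>i\<in>N. if i \<in> A then (if i \<in> T then y i else x i) else (if i \<in> U then x i else a i))" for T U
  define ep where "ep q U = sgsum add (\<lambda>T. Fp T U) {T. T \<subseteq> A \<and> even (card T) = q}" for q U
  define G where "G B T' = trunc_map N f B a (vtx B T' (trunc_pt B (vtx N A a x)) (trunc_pt B (vtx N A x y)))" for B T'
  have finN: "finite N" by (simp add: N_def)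
  have AN': "A \<subseteq> N" using AN by (simp add: N_def)
  have finA: "finite A" using AN' finN finite_subset by blast
  have finA': "finite A'" using finN by (simp add: A'_def)
  have finS: "finite {T. T \<subseteq> A \<and> P T}" for P by (rule finite_subset[of _ "Pow A"]) (use finA in auto)
  have P1: "trunc_map N f A x (vtx A T (trunc_pt A x) (trunc_pt A y)) = Fp T A'" if "T \<subseteq> A" for T
    unfolding trunc_map_def vtx_def trunc_pt_def Fp_def A'_def
    using that AN' by (intro arg_cong[where f=f] ext) (auto simp: restrict_def)
  have P2: "G (A \<union> C) T' = Fp (T' \<inter> A) (T' - A)" if "T' \<subseteq> A \<union> C" "C \<subseteq> A'" for T' C
    unfolding G_def trunc_map_def vtx_def trunc_pt_def Fp_def
    using that AN' by (intro arg_cong[where f=f] ext) (auto simp: restrict_def A'_def)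
  have LHS: "md d add A (trunc_map N f A x) (trunc_pt A x) (trunc_pt A y) = d (ep True A') (ep False A')"
    unfolding md_def ep_def
    apply simp
    apply (intro arg_cong2[where f=d] sgsum_cong)
     apply (simp_all add: P1)
    done
  have R: "sgsum add (G (A \<union> C)) {T'. T' \<subseteq> A \<union> C \<and> even (card T') = q}
           = sgsum add (\<lambda>U. ep (even (card U) = q) U) (Pow C)" if C: "C \<subseteq> A'" for C q
  proof -
    have finC: "finite C" using C finA' finite_subset by blast
    have dj: "A \<inter> C = {}" using C by (auto simp: A'_def)
    let ?S = "\<lambda>U. {T. T \<subseteq> A \<and> even (card T) = (even (card U) = q)}"
    have "Some (sgsum add (\<lambda>U. ep (even (card U) = q) U) (Pow C))
        = S.F (\<lambda>U. Some (ep (even (card U) = q) U)) (Pow C)"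
      by (rule F_Some[symmetric]) (use finC in auto)
    also have "\<dots> = S.F (\<lambda>U. S.F (\<lambda>T. Some (Fp T U)) (?S U)) (Pow C)"
      unfolding ep_def by (intro S.cong refl F_Some[symmetric] finS ne_par Ane finA)
    also have "\<dots> = S.F (\<lambda>(U, T). Some (Fp T U)) (SIGMA U:Pow C. ?S U)"
      by (rule S.Sigma) (use finC finS in auto)
    also have "\<dots> = S.F (\<lambda>z. Some (Fp (((\<lambda>(U, T). T \<union> U) z) \<inter> A) (((\<lambda>(U, T). T \<union> U) z) - A)))
                      (SIGMA U:Pow C. ?S U)"
    proof (rule S.cong[OF refl])
      fix z assume "z \<in> (SIGMA U:Pow C. ?S U)"
      then obtain U T where z: "z = (U, T)" "U \<subseteq> C" "T \<subseteq> A" by auto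
      then have "(T \<union> U) \<inter> A = T" "(T \<union> U) - A = U" using dj by auto
      then show "(\<lambda>(U, T). Some (Fp T U)) z = Some (Fp (((\<lambda>(U, T). T \<union> U) z) \<inter> A) (((\<lambda>(U, T). T \<union> U) z) - A))"
        using z by simp
    qed
    also have "\<dots> = S.F (\<lambda>T'. Some (Fp (T' \<inter> A) (T' - A))) {T'. T' \<subseteq> A \<union> C \<and> even (card T') = q}"
      by (rule S.reindex_bij_betw[OF key_bij[OF finA finC dj]])
    also have "\<dots> = S.F (\<lambda>T'. Some (G (A \<union> C) T')) {T'. T' \<subseteq> A \<union> C \<and> even (card T') = q}"
      using C by (intro S.cong refl) (simp add: P2)
    also have "\<dots> = Some (sgsum add (G (A \<union> C)) {T'. T' \<subseteq> A \<union> C \<and> even (card T') = q})"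
      using finA finC Ane by (intro F_Some ne_par) (auto intro: rev_finite_subset[of "Pow (A \<union> C)"])
    finally show ?thesis by simp
  qed
  have RT: "md d add (A \<union> C) (trunc_map N f (A \<union> C) a)
           (trunc_pt (A \<union> C) (vtx N A a x)) (trunc_pt (A \<union> C) (vtx N A x y))
         = d (ee (ep True) (ep False) C) (ee (ep False) (ep True) C)" if C: "C \<subseteq> A'" for C
  proof -
    have "md d add (A \<union> C) (trunc_map N f (A \<union> C) a)
           (trunc_pt (A \<union> C) (vtx N A a x)) (trunc_pt (A \<union> C) (vtx N A x y))
        = d (sgsum add (G (A \<union> C)) {T'. T' \<subseteq> A \<union> C \<and> even (card T') = True})
            (sgsum add (G (A \<union> C)) {T'. T' \<subseteq> A \<union> C \<and> even (card T') = False})"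
      unfolding md_def G_def by simp
    also have "\<dots> = d (sgsum add (\<lambda>U. ep (even (card U) = True) U) (Pow C))
                       (sgsum add (\<lambda>U. ep (even (card U) = False) U) (Pow C))"
      using R[OF C, of True] R[OF C, of False] by simp
    also have "\<dots> = d (ee (ep True) (ep False) C) (ee (ep False) (ep True) C)"
      unfolding ee_def by (intro arg_cong2[where f=d] sgsum_cong) auto
    finally show ?thesis .
  qed
  have "md d add A (trunc_map N f A x) (trunc_pt A x) (trunc_pt A y) = d (ep True A') (ep False A')"
    by (rule LHS)
  also have "\<dots> \<le> (\<Sum>C\<in>Pow A'. d (ee (ep True) (ep False) C) (ee (ep False) (ep True) C))"
    by (rule telescope[OF finA'])
  also have "\<dots> = (\<Sum>C\<in>Pow A'. md d add (A \<union> C) (trunc_map N f (A \<union> C) a)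
           (trunc_pt (A \<union> C) (vtx N A a x)) (trunc_pt (A \<union> C) (vtx N A x y)))"
    by (intro sum.cong refl RT[symmetric]) auto
  also have "\<dots> = (\<Sum>B\<in>{B. A \<subseteq> B \<and> B \<subseteq> N}.
         md d add B (trunc_map N f B a) (trunc_pt B (vtx N A a x)) (trunc_pt B (vtx N A x y)))"
  proof (rule sum.reindex_cong[where l="\<lambda>C. A \<union> C", symmetric])
    show "inj_on (\<lambda>C. A \<union> C) (Pow A')"
      by (rule inj_onI) (auto simp: A'_def)
    show "{B. A \<subseteq> B \<and> B \<subseteq> N} = (\<lambda>C. A \<union> C) ` Pow A'"
    proof
      show "{B. A \<subseteq> B \<and> B \<subseteq> N} \<subseteq> (\<lambda>C. A \<union> C) ` Pow A'"
      proof
        fix B assume "B \<in> {B. A \<subseteq> B \<and> B \<subseteq> N}"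
        then have "B = A \<union> (B - A)" "B - A \<in> Pow A'" by (auto simp: A'_def)
        then show "B \<in> (\<lambda>C. A \<union> C) ` Pow A'" by blast
      qed
      show "(\<lambda>C. A \<union> C) ` Pow A' \<subseteq> {B. A \<subseteq> B \<and> B \<subseteq> N}" using AN' by (auto simp: A'_def)
    qed
  qed simp
  finally show ?thesis by (simp add: N_def)
qed

end

theorem lemma2:
  fixes n :: nat and a b x y :: "nat \<Rightarrow> real"
    and d :: "'m \<Rightarrow> 'm \<Rightarrow> real" and add :: "'m \<Rightarrow> 'm \<Rightarrow> 'm"
    and f :: "(nat \<Rightarrow> real) \<Rightarrow> 'm" and A :: "nat set"
  assumes "metric_semigroup d add"
    and "\<forall>i<n. a i < b i"
    and "A \<subseteq> {..<n}" and "A \<noteq> {}"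
    and "x \<in> rect {..<n} a b" and "y \<in> rect {..<n} a b"
    and "\<forall>i<n. x i \<le> y i"
  shows "md d add A (trunc_map {..<n} f A x) (trunc_pt A x) (trunc_pt A y)
    \<le> (\<Sum>B\<in>{B. A \<subseteq> B \<and> B \<subseteq> {..<n}}.
         md d add B (trunc_map {..<n} f B a)
           (trunc_pt B (vtx {..<n} A a x)) (trunc_pt B (vtx {..<n} A x y)))"
proof -
  interpret msg d add by unfold_locales (rule assms(1))
  show ?thesis using assms(3,4) by (rule main)
qed

end
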